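(* Let $n,d\ge 2$ be integers with $d\ne 3$, let $\mathbf a=(0,\dots,0,1,d-1)\in V(n,d)$ and $\Gamma=V(n,d)\setminus\{\mathbf a\}$. Let $x,y,z\in\Gamma$. If the chains $(x,y)$, $(y,z)$ and $(x,z)$ are minimal, then the chain $(x,y,z)$ is minimal.
   Context: $V(n,d)=\{\mathbf b\in\mathbb N^n:\sum_i b_i=d\}$. Order $V(n,d)$ lexicographically: $b<c$ iff the first nonzero coordinate of $c-b$ is positive (so $(0,\dots,0,d)$ is the smallest element). For $k\ge1$, a chain of length $k$ is a tuple $(u^1,\dots,u^k)\in V(n,d)^k$ (its links); its $\mathbf a$-degree is the number of indices $j$ with $u^j=\mathbf a$. Two chains of length $k$ with the same sum $u^1+\cdots+u^k$ are compared as follows: $(u^1,\dots,u^k)<(w^1,\dots,w^k)$ iff either the $\mathbf a$-degree of $u$ is smaller than that of $w$, or they have the same $\mathbf a$-degree and $(u^1,\dots,u^k)$ is lexicographically smaller than $(w^1,\dots,w^k)$ (comparing $u^1$ with $w^1$ first, using the order on $V(n,d)$). A chain $(u^1,\dots,u^k)$ is minimal if it is the smallest among all chains $(w^1,\dots,w^k)\in V(n,d)^k$ with $\sum_j w^j=\sum_j u^j$. *)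

theory Defs
  imports Main
begin

text \<open>Vectors in N^n are functions nat => nat supported on {0..<n} (coordinates 0..n-1).\<close>
definition V :: "nat \<Rightarrow> nat \<Rightarrow> (nat \<Rightarrow> nat) set" where
  "V n d = {b. (\<forall>i\<ge>n. b i = 0) \<and> (\<Sum>i<n. b i) = d}"

definition vlex_less :: "(nat \<Rightarrow> nat) \<Rightarrow> (nat \<Rightarrow> nat) \<Rightarrow> bool" where
  "vlex_less b c = (\<exists>i. (\<forall>j<i. b j = c j) \<and> b i < c i)"

definition avec :: "nat \<Rightarrow> nat \<Rightarrow> nat \<Rightarrow> nat" where
  "avec n d = (\<lambda>i. if i = n - 2 then 1 else if i = n - 1 then d - 1 else 0)"

definition adeg :: "(nat \<Rightarrow> nat) \<Rightarrow> (nat \<Rightarrow> nat) list \<Rightarrow> nat" where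
  "adeg a u = length (filter (\<lambda>v. v = a) u)"

definition chain_sum :: "(nat \<Rightarrow> nat) list \<Rightarrow> nat \<Rightarrow> nat" where
  "chain_sum u = (\<lambda>i. sum_list (map (\<lambda>v. v i) u))"

definition chain_lex_less :: "(nat \<Rightarrow> nat) list \<Rightarrow> (nat \<Rightarrow> nat) list \<Rightarrow> bool" where
  "chain_lex_less u w =
     (\<exists>i < length u. (\<forall>j<i. u ! j = w ! j) \<and> vlex_less (u ! i) (w ! i))"

definition chain_less :: "(nat \<Rightarrow> nat) \<Rightarrow> (nat \<Rightarrow> nat) list \<Rightarrow> (nat \<Rightarrow> nat) list \<Rightarrow> bool" where
  "chain_less a u w = (adeg a u < adeg a w \<or> (adeg a u = adeg a w \<and> chain_lex_less u w))"

definition is_chain :: "nat \<Rightarrow> nat \<Rightarrow> nat \<Rightarrow> (nat \<Rightarrow> nat) list \<Rightarrow> bool" where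
  "is_chain n d k u = (k \<ge> 1 \<and> length u = k \<and> set u \<subseteq> V n d)"

definition minimal_chain :: "nat \<Rightarrow> nat \<Rightarrow> (nat \<Rightarrow> nat) \<Rightarrow> (nat \<Rightarrow> nat) list \<Rightarrow> bool" where
  "minimal_chain n d a u = (is_chain n d (length u) u \<and>
     (\<forall>w. is_chain n d (length u) w \<and> chain_sum w = chain_sum u \<longrightarrow>
          w = u \<or> chain_less a u w))"

end

theory Submission
  imports Defs
begin

lemma V_lin:
  assumes "\<forall>k. u k + v k = x k + y k" "x \<in> V n d1" "y \<in> V n d2" "v \<in> V n d3"
  shows "u \<in> V n (d1 + d2 - d3)"
proof -
  have s: "(\<Sum>k<n. u k) + (\<Sum>k<n. v k) = (\<Sum>k<n. x k) + (\<Sum>k<n. y k)"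
    using assms(1) by (simp add: sum.distrib[symmetric])
  have supp: "\<forall>i\<ge>n. u i = 0"
  proof (intro allI impI)
    fix i assume "n \<le> i"
    then have "x i = 0" "y i = 0" using assms(2,3) by (auto simp: V_def)
    then show "u i = 0" using assms(1) by (metis add_is_0)
  qed
  show ?thesis using assms(2-4) s supp unfolding V_def by auto
qed

lemma two_spike:
  assumes "i \<noteq> j" "i < n" "j < n"
  shows "(\<lambda>k. if k = i then c1 else if k = j then c2 else (0::nat)) \<in> V n (c1 + c2)"
proof -
  have "(\<Sum>k<n. if k = i then c1 else if k = j then c2 else (0::nat)) = (\<Sum>k<n. (if k = i then c1 else 0) + (if k = j then c2 else 0))"
    by (rule sum.cong) (use assms in auto)
  also have "\<dots> = c1 + c2" using assms by (simp add: sum.distrib)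
  finally show ?thesis using assms unfolding V_def by auto
qed

lemma unit_V: "i < n \<Longrightarrow> (\<lambda>k. if k = i then 1::nat else 0) \<in> V n 1"
  by (auto simp: V_def)

lemma V_supp: "v \<in> V n d \<Longrightarrow> 0 < v k \<Longrightarrow> k < n"
  by (cases "k < n") (auto simp: V_def)

lemma vlex_irrefl: "\<not> vlex_less b b" by (auto simp: vlex_less_def)

lemma vlex_asym: assumes "vlex_less b c" shows "\<not> vlex_less c b"
proof
  assume "vlex_less c b"
  then obtain j where j: "\<forall>k<j. c k = b k" "c j < b j" by (auto simp: vlex_less_def)
  from assms obtain i where i: "\<forall>k<i. b k = c k" "b i < c i" by (auto simp: vlex_less_def)
  show False
  proof (cases i j rule: linorder_cases)
    case less then show ?thesis using i j by force
  next case equal then show ?thesis using i j by simp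
  next case greater then show ?thesis using i j by force
  qed
qed

lemma vlex_total: assumes "b \<noteq> c" shows "vlex_less b c \<or> vlex_less c b"
proof -
  from assms obtain k where k: "b k \<noteq> c k" by auto
  define m where "m = (LEAST k. b k \<noteq> c k)"
  have m: "b m \<noteq> c m" unfolding m_def by (rule LeastI) (rule k)
  have pre: "\<forall>j<m. b j = c j" unfolding m_def using not_less_Least by blast
  show ?thesis
  proof (cases "b m < c m")
    case True then show ?thesis using pre unfolding vlex_less_def by blast
  next
    case False then have "c m < b m" using m by simp
    then show ?thesis using pre unfolding vlex_less_def by metis
  qed
qed

lemma chain_sum2: "chain_sum [x,y] = (\<lambda>k. x k + y k)" by (simp add: chain_sum_def)

lemma pair_better:
  assumes min: "minimal_chain n d a [x,y]" and "x \<noteq> a" "y \<noteq> a"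
    and "x' \<in> V n d" "y' \<in> V n d" "x' \<noteq> a" "y' \<noteq> a"
    and eq: "\<forall>k. x' k + y' k = x k + y k" and lt: "vlex_less x' x"
  shows False
proof -
  have ch: "is_chain n d (length [x,y]) [x',y']" using assms by (simp add: is_chain_def)
  have cs: "chain_sum [x',y'] = chain_sum [x,y]" using eq by (simp add: chain_sum2)
  from min ch cs have "[x',y'] = [x,y] \<or> chain_less a [x,y] [x',y']"
    unfolding minimal_chain_def by blast
  then show False
  proof
    assume "[x',y'] = [x,y]" then show False using lt vlex_irrefl by auto
  next
    assume "chain_less a [x,y] [x',y']"
    moreover have "adeg a [x,y] = 0" "adeg a [x',y'] = 0" using assms by (auto simp: adeg_def)
    ultimately have "chain_lex_less [x,y] [x',y']" by (simp add: chain_less_def)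
    then obtain i where "i < 2" "\<forall>j<i. [x,y]!j = [x',y']!j" "vlex_less ([x,y]!i) ([x',y']!i)"
      unfolding chain_lex_less_def by (metis length_Cons list.size(3) numeral_2_eq_2)
    then show False using lt vlex_asym vlex_irrefl
      by (cases i) (auto simp: less_Suc_eq)
  qed
qed

lemma avec_SS: "avec (Suc (Suc p)) d k = (if k = p then 1 else if k = Suc p then d - 1 else 0)"
  by (simp add: avec_def)

lemma Vsplit: assumes "v \<in> V (Suc (Suc p)) d" shows "(\<Sum>k<p. v k) + v p + v (Suc p) = d"
  using assms by (simp add: V_def)

lemma eq_a:
  assumes "v \<in> V (Suc (Suc p)) d" "\<forall>k<p. v k = 0" "v p = 1" "v (Suc p) = d - 1"
  shows "v = avec (Suc (Suc p)) d"
proof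
  fix k show "v k = avec (Suc (Suc p)) d k"
  proof -
    have out: "\<forall>i\<ge>Suc (Suc p). v i = 0" using assms(1) by (simp add: V_def)
    show ?thesis
      using assms(2-4) out[rule_format, of k] by (cases "k < p"; cases "k = p"; cases "k = Suc p") (simp_all add: avec_SS)
  qed
qed

lemma lex_sum:
  assumes "w \<in> V n d" "x \<in> V n d" "\<forall>j<i. w j = x j" "w i < x i"
    "\<forall>k. i < k \<longrightarrow> k < n \<longrightarrow> w k \<le> x k"
  shows False
proof -
  have "i < n" using assms(2,4) V_supp by fastforce
  have "(\<Sum>k<n. w k) < (\<Sum>k<n. x k)"
  proof (rule sum_strict_mono_ex1)
    show "\<forall>k\<in>{..<n}. w k \<le> x k" using assms(3-5) by (metis lessThan_iff linorder_neqE_nat order.strict_implies_order order_refl)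
    show "\<exists>k\<in>{..<n}. w k < x k" using \<open>i < n\<close> assms(4) by auto
  qed auto
  then show False using assms(1,2) by (simp add: V_def)
qed


lemma move_x:
  assumes n: "n = Suc (Suc p)"
    and min: "minimal_chain n d (avec n d) [x,y]"
    and x: "x \<in> V n d" "x \<noteq> avec n d" and y: "y \<in> V n d" "y \<noteq> avec n d"
    and ij: "i < j" "0 < x i" "0 < y j"
  shows "\<forall>k. (if k = i then x k - 1 else if k = j then x k + 1 else x k) = avec n d k"
proof -
  define a where "a = avec n d"
  define x' where "x' = (\<lambda>k. if k = i then x k - 1 else if k = j then x k + 1 else x k)"
  define y' where "y' = (\<lambda>k. if k = i then y k + 1 else if k = j then y k - 1 else y k)"
  have jn: "j < n" using V_supp[OF y(1) ij(3)] .
  have in_: "i < n" using jn ij by simp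
  have x'V: "x' \<in> V n d"
    using V_lin[of x' "\<lambda>k. if k = i then 1 else 0" x "\<lambda>k. if k = j then 1 else 0" n d 1 1]
      x(1) unit_V[OF jn] unit_V[OF in_] ij by (auto simp: x'_def)
  have y'V: "y' \<in> V n d"
    using V_lin[of y' "\<lambda>k. if k = j then 1 else 0" y "\<lambda>k. if k = i then 1 else 0" n d 1 1]
      y(1) unit_V[OF jn] unit_V[OF in_] ij by (auto simp: y'_def)
  have eq: "\<forall>k. x' k + y' k = x k + y k" using ij by (auto simp: x'_def y'_def)
  have lt: "vlex_less x' x" unfolding vlex_less_def
    using ij by (intro exI[of _ i]) (auto simp: x'_def)
  have "x' = a \<or> y' = a"
    using pair_better[OF min x(2) y(2) x'V y'V _ _ eq lt] a_def by blast
  moreover have "y' \<noteq> a"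
  proof
    assume ya: "y' = a"
    have yi: "y i + 1 = a i" using ya ij by (metis y'_def)
    then have ip: "i = p" using ij jn by (auto simp: a_def n avec_SS split: if_splits)
    then have jq: "j = Suc p" using ij jn n by simp
    have y0: "\<forall>k. k \<noteq> Suc p \<longrightarrow> y k = 0"
    proof (intro allI impI)
      fix k assume "k \<noteq> Suc p"
      then show "y k = 0" using fun_cong[OF ya, of k] ip jq
        by (auto simp: y'_def a_def n avec_SS split: if_splits)
    qed
    have ex: "\<exists>k. 0 < x k" using ij by blast
    define m where "m = (LEAST k. 0 < x k)"
    have xm: "0 < x m" unfolding m_def using ex by (metis LeastI)
    have mp: "m \<le> p" unfolding m_def using ij ip by (metis Least_le)
    have pre: "\<forall>k<m. x k = 0" unfolding m_def using not_less_Least by blast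
    have "vlex_less y x" unfolding vlex_less_def
      using xm mp pre y0 by (intro exI[of _ m]) auto
    moreover have "\<not> vlex_less y x"
      using pair_better[OF min x(2) y(2) y(1) x(1) y(2) x(2)] by (metis add.commute)
    ultimately show False by blast
  qed
  ultimately have "x' = a" by blast
  show ?thesis
  proof
    fix k show "(if k = i then x k - 1 else if k = j then x k + 1 else x k) = avec n d k"
      using fun_cong[OF \<open>x' = a\<close>, of k] by (simp only: x'_def a_def)
  qed
qed

lemma R1:
  assumes n: "n = Suc (Suc p)" and d: "d \<ge> 2"
    and min: "minimal_chain n d (avec n d) [x,y]"
    and x: "x \<in> V n d" "x \<noteq> avec n d" and y: "y \<in> V n d" "y \<noteq> avec n d"
    and xf: "\<forall>k. x k = (if k = p then 2 else if k = Suc p then d - 2 else 0)"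
    and yq: "2 \<le> y (Suc p)"
  shows False
proof -
  define x' where "x' = (\<lambda>k. if k = p then 0 else if k = Suc p then d else (0::nat))"
  define y' where "y' = (\<lambda>k. x k + y k - x' k)"
  have x'V: "x' \<in> V n d" using two_spike[of p "Suc p" n 0 d] n by (simp add: x'_def)
  have le: "\<forall>k. x' k \<le> x k + y k"
    using xf yq d unfolding x'_def by auto
  have eq: "\<forall>k. y' k + x' k = x k + y k" using le unfolding y'_def by simp
  have y'V: "y' \<in> V n d" using V_lin[OF eq x(1) y(1) x'V] by simp
  have "y' p \<ge> 2" using xf by (simp add: y'_def x'_def)
  then have "y' \<noteq> avec n d" using n by (auto simp: avec_SS)
  moreover have "x' p \<noteq> avec n d p" using n by (simp add: avec_SS x'_def)
  then have "x' \<noteq> avec n d" by metis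
  moreover have "vlex_less x' x" unfolding vlex_less_def
    using xf by (intro exI[of _ p]) (auto simp: x'_def)
  moreover have "\<forall>k. x' k + y' k = x k + y k" using eq by (simp add: add.commute)
  ultimately show False using pair_better[OF min x(2) y(2) x'V y'V] by blast
qed

lemma R2:
  assumes n: "n = Suc (Suc p)" and d: "d \<ge> 2"
    and min: "minimal_chain n d (avec n d) [x,y]"
    and x: "x \<in> V n d" "x \<noteq> avec n d" and y: "y \<in> V n d" "y \<noteq> avec n d"
    and ip: "i < p"
    and xf: "\<forall>k. x k = (if k = i then 1 else if k = Suc p then d - 1 else 0)"
    and yp: "2 \<le> y p"
  shows False
proof -
  define e where "e = d - 2"
  define x' where "x' = (\<lambda>k. if k = p then 2 else if k = Suc p then e else (0::nat))"
  define y' where "y' = (\<lambda>k. x k + y k - x' k)"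
  have de: "d = 2 + e" using d by (simp add: e_def)
  have "x' \<in> V n (2 + e)" using two_spike[of p "Suc p" n 2 e] n by (simp add: x'_def)
  then have x'V: "x' \<in> V n d" using de by metis
  have le: "\<forall>k. x' k \<le> x k + y k"
    using xf yp d ip unfolding x'_def e_def by auto
  have eq: "\<forall>k. y' k + x' k = x k + y k" using le unfolding y'_def by simp
  have y'V: "y' \<in> V n d" using V_lin[OF eq x(1) y(1) x'V] by simp
  have "y' i \<ge> 1" using xf ip by (simp add: y'_def x'_def)
  then have "y' \<noteq> avec n d" using n ip by (auto simp: avec_SS)
  moreover have "x' p \<noteq> avec n d p" using n by (simp add: avec_SS x'_def)
  then have "x' \<noteq> avec n d" by metis
  moreover have "vlex_less x' x" unfolding vlex_less_def
    using xf ip by (intro exI[of _ i]) (auto simp: x'_def)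
  moreover have "\<forall>k. x' k + y' k = x k + y k" using eq by (simp add: add.commute)
  ultimately show False using pair_better[OF min x(2) y(2) x'V y'V] by blast
qed


definition cls :: "nat \<Rightarrow> nat \<Rightarrow> (nat \<Rightarrow> nat) \<Rightarrow> (nat \<Rightarrow> nat) \<Rightarrow> bool" where
 "cls p d x y \<longleftrightarrow> (\<forall>i j. i < j \<longrightarrow> 0 < x i \<longrightarrow> y j = 0)
   \<or> ((\<forall>k. x k = (if k = p then 2 else if k = Suc p then d - 2 else 0)) \<and> y (Suc p) = 1)
   \<or> (\<exists>i<p. (\<forall>k. x k = (if k = i then 1 else if k = Suc p then d - 1 else 0)) \<and> y (Suc p) = 0
        \<and> y p = 1 \<and> (\<forall>j. i < j \<longrightarrow> j < p \<longrightarrow> y j = 0))"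

lemma classify:
  assumes n: "n = Suc (Suc p)" and d: "d \<ge> 2"
    and min: "minimal_chain n d (avec n d) [x,y]"
    and x: "x \<in> V n d" "x \<noteq> avec n d" and y: "y \<in> V n d" "y \<noteq> avec n d"
  shows "cls p d x y"
proof (cases "\<forall>i j. i < j \<longrightarrow> 0 < x i \<longrightarrow> y j = 0")
  case True then show ?thesis by (simp add: cls_def)
next
  case False
  then obtain i j where ij: "i < j" "0 < x i" "0 < y j" by auto
  note mv = move_x[OF n min x y]
  have H: "\<forall>k. (if k = i then x k - 1 else if k = j then x k + 1 else x k) = avec n d k"
    by (rule mv[OF ij])
  have jn: "j < n" using V_supp[OF y(1) ij(3)] .
  have Hj: "x j + 1 = avec n d j" using H[rule_format, of j] ij by simp
  have Hi: "x i - 1 = avec n d i" using H[rule_format, of i] by simp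
  have Hk: "\<And>k. k \<noteq> i \<Longrightarrow> k \<noteq> j \<Longrightarrow> x k = avec n d k" using H by metis
  have xout: "\<And>k. k \<ge> n \<Longrightarrow> x k = 0" using x(1) by (simp add: V_def)
  have "j = p \<or> j = Suc p" using Hj by (auto simp: n avec_SS split: if_splits)
  then show ?thesis
  proof
    assume jp: "j = p"
    have ip: "i < p" using ij jp by simp
    have xp: "x p = 0" using Hj jp n by (simp add: avec_SS)
    have xi: "x i = 1" using Hi ij ip n by (simp add: avec_SS)
    have xf: "\<forall>k. x k = (if k = i then 1 else if k = Suc p then d - 1 else 0)"
    proof
      fix k show "x k = (if k = i then 1 else if k = Suc p then d - 1 else 0)"
        using xi xp Hk[of k] ip jp n xout[of k] by (cases "k = p") (auto simp: avec_SS)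
    qed
    have yq: "y (Suc p) = 0"
    proof (rule ccontr)
      assume "y (Suc p) \<noteq> 0"
      then have "\<forall>k. (if k = i then x k - 1 else if k = Suc p then x k + 1 else x k) = avec n d k"
        using mv[of i "Suc p"] ip ij by simp
      then have "x p = avec n d p" using ip by (metis n_not_Suc_n less_irrefl)
      then show False using xp n by (simp add: avec_SS)
    qed
    have yz: "\<forall>j'. i < j' \<longrightarrow> j' < p \<longrightarrow> y j' = 0"
    proof (intro allI impI, rule ccontr)
      fix j' assume a: "i < j'" "j' < p" "y j' \<noteq> 0"
      then have "\<forall>k. (if k = i then x k - 1 else if k = j' then x k + 1 else x k) = avec n d k"
        using mv[of i j'] ij by simp
      then have "x p = avec n d p" using ip a by (metis less_irrefl)
      then show False using xp n by (simp add: avec_SS)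
    qed
    have yp: "y p = 1"
    proof -
      have "y p \<ge> 1" using ij jp by simp
      moreover have "\<not> 2 \<le> y p" using R2[OF n d min x y ip xf] by blast
      ultimately show ?thesis by simp
    qed
    show ?thesis unfolding cls_def using ip xf yq yp yz by blast
  next
    assume jq: "j = Suc p"
    have xq: "x (Suc p) = d - 2" using Hj jq n d by (simp add: avec_SS)
    show ?thesis
    proof (cases "i = p")
      case True
      have xp: "x p = 2" using Hi True ij n by (simp add: avec_SS)
      have xf: "\<forall>k. x k = (if k = p then 2 else if k = Suc p then d - 2 else 0)"
      proof
        fix k show "x k = (if k = p then 2 else if k = Suc p then d - 2 else 0)"
          using xq xp Hk[of k] True jq n xout[of k] by (cases "k = p"; cases "k = Suc p") (auto simp: avec_SS)
      qed
      have "y (Suc p) = 1"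
      proof -
        have "y (Suc p) \<ge> 1" using ij jq by simp
        moreover have "\<not> 2 \<le> y (Suc p)" using R1[OF n d min x y xf] by blast
        ultimately show ?thesis by simp
      qed
      then show ?thesis unfolding cls_def using xf by blast
    next
      case False
      then have ip: "i < p" using ij jq by simp
      have xp: "x p = 1" using Hk[of p] ip jq n by (simp add: avec_SS)
      have "\<forall>k. (if k = p then x k - 1 else if k = Suc p then x k + 1 else x k) = avec n d k"
        using mv[of p "Suc p"] xp ij jq by simp
      then have "x i = avec n d i" using ip by (metis less_irrefl n_not_Suc_n less_SucI)
      then show ?thesis using ip ij n by (simp add: avec_SS)
    qed
  qed
qed


lemma triple_key:
  assumes n: "n = Suc (Suc p)" and d: "d \<ge> 2" "d \<noteq> 3"
    and x: "x \<in> V n d" and y: "y \<in> V n d" and z: "z \<in> V n d"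
    and cxy: "cls p d x y" and cxz: "cls p d x z" and cyz: "cls p d y z"
    and w: "w \<in> V n d" "w \<noteq> avec n d"
    and ws: "\<forall>k. w k \<le> x k + y k + z k"
  shows "\<not> vlex_less w x"
proof
  assume "vlex_less w x"
  then obtain i where pre: "\<forall>j<i. w j = x j" and lt: "w i < x i" by (auto simp: vlex_less_def)
  have wS: "(\<Sum>k<p. w k) + w p + w (Suc p) = d" using Vsplit w(1) n by simp
  have yS: "(\<Sum>k<p. y k) + y p + y (Suc p) = d" using Vsplit y n by simp
  have wout: "\<And>k. k \<ge> n \<Longrightarrow> w k = 0" using w(1) by (simp add: V_def)
  have xout: "\<And>k. k \<ge> n \<Longrightarrow> x k = 0" using x by (simp add: V_def)
  have trivlex: "i \<ge> Suc p \<Longrightarrow> False"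
    using lex_sum[OF w(1) x pre lt] n by auto
  show False
  proof (cases "\<forall>k. x k = (if k = p then 2 else if k = Suc p then d - 2 else 0)")
    case A: True
    have qle: "\<And>v. cls p d x v \<Longrightarrow> v (Suc p) \<le> 1"
    proof -
      fix v assume "cls p d x v"
      then consider (S) "\<forall>i j. i < j \<longrightarrow> 0 < x i \<longrightarrow> v j = 0" | (B1) "v (Suc p) = 1"
        | (B2) i' where "i' < p" "\<forall>k. x k = (if k = i' then 1 else if k = Suc p then d - 1 else 0)"
        unfolding cls_def by blast
      then show "v (Suc p) \<le> 1"
      proof cases
        case S then show ?thesis using A by (metis lessI zero_less_numeral le0)
      next
        case B1 then show ?thesis by simp
      next
        case B2 then show ?thesis using A by (metis less_irrefl n_not_Suc_n less_SucI zero_neq_one)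
      qed
    qed
    have yq: "y (Suc p) \<le> 1" by (rule qle[OF cxy])
    have zq: "z (Suc p) \<le> 1" by (rule qle[OF cxz])
    have notboth: "\<not> (y (Suc p) = 1 \<and> z (Suc p) = 1)"
    proof
      assume b: "y (Suc p) = 1 \<and> z (Suc p) = 1"
      from cyz consider (S) "\<forall>i j. i < j \<longrightarrow> 0 < y i \<longrightarrow> z j = 0"
        | (B1) "\<forall>k. y k = (if k = p then 2 else if k = Suc p then d - 2 else 0)"
        | (B2) "z (Suc p) = 0"
        unfolding cls_def by (elim disjE exE conjE) blast+
      then show False
      proof cases
        case S
        have "\<exists>k<Suc p. 0 < y k"
        proof (rule ccontr)
          assume "\<not> ?thesis"
          then have "\<forall>k<Suc p. y k = 0" by auto
          then have "(\<Sum>k<p. y k) = 0" "y p = 0" by auto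
          then show False using yS b d by simp
        qed
        then show False using S b by auto
      next
        case B1 then have "d - 2 = 1" using B1[rule_format, of "Suc p"] b by simp
        then show False using d by arith
      next
        case B2 then show False using b by simp
      qed
    qed
    have sq: "w (Suc p) \<le> d - 1"
      using ws[rule_format, of "Suc p"] A yq zq notboth d by (simp; linarith)
    show False
    proof (cases "i < p")
      case True then show False using A lt by simp
    next
      case False
      show False
      proof (cases "i = p")
        case True
        have w0: "\<forall>k<p. w k = 0" using pre A True by auto
        then have "(\<Sum>k<p. w k) = 0" by simp
        then have "w p + w (Suc p) = d" using wS by simp
        moreover have "w p < 2" using lt A True by simp
        ultimately have "w p = 1" "w (Suc p) = d - 1" using sq d(1) by arith+
        then have "w = avec n d" using eq_a[of w p d] w0 w(1) n by simp
        then show False using w(2) by simp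
      next
        case False
        then show False using trivlex \<open>\<not> i < p\<close> by simp
      qed
    qed
  next
    case notA: False
    show False
    proof (cases "\<exists>i'<p. \<forall>k. x k = (if k = i' then 1 else if k = Suc p then d - 1 else 0)")
      case True
      then obtain i' where ip: "i' < p" and B: "\<forall>k. x k = (if k = i' then 1 else if k = Suc p then d - 1 else 0)"
        by blast
      have gen: "\<And>v. cls p d x v \<Longrightarrow> (\<forall>j. i' < j \<longrightarrow> j < p \<longrightarrow> v j = 0) \<and> v (Suc p) = 0 \<and> v p \<le> 1"
      proof -
        fix v assume "cls p d x v"
        then consider (S) "\<forall>i j. i < j \<longrightarrow> 0 < x i \<longrightarrow> v j = 0"
          | (B1) "\<forall>k. x k = (if k = p then 2 else if k = Suc p then d - 2 else 0)"
          | (B2) i'' where "i'' < p" "\<forall>k. x k = (if k = i'' then 1 else if k = Suc p then d - 1 else 0)"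
            "v (Suc p) = 0" "v p = 1" "\<forall>j. i'' < j \<longrightarrow> j < p \<longrightarrow> v j = 0"
          unfolding cls_def by blast
        then show "(\<forall>j. i' < j \<longrightarrow> j < p \<longrightarrow> v j = 0) \<and> v (Suc p) = 0 \<and> v p \<le> 1"
        proof cases
          case S
          have "0 < x i'" using B by simp
          then have "\<forall>j. i' < j \<longrightarrow> v j = 0" using S by blast
          then show ?thesis using ip by simp
        next
          case B1 then show ?thesis using notA by blast
        next
          case B2
          have "x i'' = 1" using B2(2) by simp
          then have "i'' = i'" using B B2(1) by (metis less_irrefl n_not_Suc_n less_SucI zero_neq_one)
          then show ?thesis using B2 by simp
        qed
      qed
      have gy: "(\<forall>j. i' < j \<longrightarrow> j < p \<longrightarrow> y j = 0) \<and> y (Suc p) = 0 \<and> y p \<le> 1" by (rule gen[OF cxy])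
      have gz: "(\<forall>j. i' < j \<longrightarrow> j < p \<longrightarrow> z j = 0) \<and> z (Suc p) = 0 \<and> z p \<le> 1" by (rule gen[OF cxz])
      have notboth: "\<not> (y p = 1 \<and> z p = 1)"
      proof
        assume b: "y p = 1 \<and> z p = 1"
        from cyz consider (S) "\<forall>i j. i < j \<longrightarrow> 0 < y i \<longrightarrow> z j = 0"
          | (B1) "\<forall>k. y k = (if k = p then 2 else if k = Suc p then d - 2 else 0)"
          | (B2) "y (Suc p) = d - 1"
          unfolding cls_def by (elim disjE exE conjE) auto
        then show False
        proof cases
          case S
          have "\<exists>k<p. 0 < y k"
          proof (rule ccontr)
            assume "\<not> ?thesis"
            then have "\<forall>k<p. y k = 0" by auto
            then have "(\<Sum>k<p. y k) = 0" by auto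
            then show False using yS b gy d by simp
          qed
          then show False using S b by auto
        next
          case B1 then show False using B1[rule_format, of p] b by simp
        next
          case B2 then show False using gy d by simp
        qed
      qed
      have wq: "w (Suc p) \<le> d - 1" using ws[rule_format, of "Suc p"] B gy gz ip by simp
      have wp: "w p \<le> 1" using ws[rule_format, of p] B gy gz notboth ip by auto
      show False
      proof (cases "i < i'")
        case True then have "x i = 0" using B ip by simp
        then show False using lt by simp
      next
        case False
        show False
        proof (cases "i = i'")
          case True
          have w0: "\<forall>k<p. w k = 0"
          proof (intro allI impI)
            fix k assume kp: "k < p"
            show "w k = 0"
            proof (cases "k < i'")
              case True then show ?thesis using pre B \<open>i = i'\<close> ip kp by auto
            next
              case False
              show ?thesis
              proof (cases "k = i'")
                case True then show ?thesis using lt B \<open>i = i'\<close> by simp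
              next
                case False
                then have "i' < k" using \<open>\<not> k < i'\<close> by simp
                then show ?thesis using ws[rule_format, of k] B gy gz kp by simp
              qed
            qed
          qed
          then have "(\<Sum>k<p. w k) = 0" by simp
          then have "w p + w (Suc p) = d" using wS by simp
          then have "w p = 1" "w (Suc p) = d - 1" using wp wq d by auto
          then have "w = avec n d" using eq_a[of w p d] w0 w(1) n by simp
          then show False using w(2) by simp
        next
          case False
          then have "i' < i" using \<open>\<not> i < i'\<close> by simp
          show False
          proof (cases "i \<ge> Suc p")
            case True then show False using trivlex by simp
          next
            case False
            then have "x i = 0" using B \<open>i' < i\<close> by simp
            then show False using lt by simp
          qed
        qed
      qed
    next
      case notB: False
      have S: "\<And>v. cls p d x v \<Longrightarrow> \<forall>i j. i < j \<longrightarrow> 0 < x i \<longrightarrow> v j = 0"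
        using notA notB unfolding cls_def by blast
      have "\<forall>k. i < k \<longrightarrow> k < n \<longrightarrow> w k \<le> x k"
      proof (intro allI impI)
        fix k assume "i < k" "k < n"
        have "0 < x i" using lt by simp
        then have "y k = 0" "z k = 0" using S[OF cxy] S[OF cxz] \<open>i < k\<close> by blast+
        then show "w k \<le> x k" using ws[rule_format, of k] by simp
      qed
      then show False using lex_sum[OF w(1) x pre lt] by blast
    qed
  qed
qed


theorem lemma2p6:
  fixes n d :: nat and x y z :: "nat \<Rightarrow> nat"
  assumes "n \<ge> 2" and "d \<ge> 2" and "d \<noteq> 3"
    and "x \<in> V n d - {avec n d}" and "y \<in> V n d - {avec n d}" and "z \<in> V n d - {avec n d}"
    and "minimal_chain n d (avec n d) [x, y]"
    and "minimal_chain n d (avec n d) [y, z]"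
    and "minimal_chain n d (avec n d) [x, z]"
  shows "minimal_chain n d (avec n d) [x, y, z]"
proof -
  define p where "p = n - 2"
  have n: "n = Suc (Suc p)" using assms(1) unfolding p_def by arith
  define a where "a = avec n d"
  have x: "x \<in> V n d" "x \<noteq> a" and y: "y \<in> V n d" "y \<noteq> a" and z: "z \<in> V n d" "z \<noteq> a"
    using assms(4-6) by (auto simp: a_def)
  have cxy: "cls p d x y" using classify[OF n assms(2) assms(7)] x y by (simp add: a_def)
  have cyz: "cls p d y z" using classify[OF n assms(2) assms(8)] y z by (simp add: a_def)
  have cxz: "cls p d x z" using classify[OF n assms(2) assms(9)] x z by (simp add: a_def)
  have u0: "adeg a [x,y,z] = 0" using x y z by (auto simp: adeg_def)
  have "minimal_chain n d a [x, y, z]"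
    unfolding minimal_chain_def
  proof (intro conjI allI impI)
    show "is_chain n d (length [x, y, z]) [x, y, z]" using x y z by (simp add: is_chain_def)
  next
    fix w assume "is_chain n d (length [x, y, z]) w \<and> chain_sum w = chain_sum [x, y, z]"
    then have wc: "is_chain n d 3 w" and wsum: "chain_sum w = chain_sum [x, y, z]" by (auto simp: numeral_3_eq_3)
    then have "length w = 3" by (simp add: is_chain_def)
    then have "\<exists>w1 w2 w3. w = [w1, w2, w3]"
      by (auto simp: numeral_3_eq_3 length_Suc_conv)
    then obtain w1 w2 w3 where wdef: "w = [w1, w2, w3]" by blast
    have wV: "w1 \<in> V n d" "w2 \<in> V n d" "w3 \<in> V n d" using wc wdef by (auto simp: is_chain_def)
    have ws: "\<forall>k. w1 k + w2 k + w3 k = x k + y k + z k"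
    proof
      fix k show "w1 k + w2 k + w3 k = x k + y k + z k"
        using fun_cong[OF wsum, of k] wdef by (simp add: chain_sum_def add.assoc)
    qed
    show "w = [x, y, z] \<or> chain_less a [x, y, z] w"
    proof (cases "a \<in> set w")
      case True
      then have "filter (\<lambda>v. v = a) w \<noteq> []" by (auto simp: filter_empty_conv)
      then have "adeg a w > 0" by (simp add: adeg_def)
      then show ?thesis using u0 by (simp add: chain_less_def)
    next
      case False
      then have wa: "w1 \<noteq> a" "w2 \<noteq> a" "w3 \<noteq> a" using wdef by auto
      have w0: "adeg a w = 0" using wa wdef by (auto simp: adeg_def)
      have ws1: "\<forall>k. w1 k \<le> x k + y k + z k"
      proof
        fix k show "w1 k \<le> x k + y k + z k" using ws[rule_format, of k] by linarith
      qed
      have wa1: "w1 \<noteq> avec n d" using wa by (simp add: a_def)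
      have key: "\<not> vlex_less w1 x"
        by (rule triple_key[OF n assms(2,3) x(1) y(1) z(1) cxy cxz cyz wV(1) wa1 ws1])
      show ?thesis
      proof (cases "w1 = x")
        case False
        then have "vlex_less x w1" using key vlex_total by blast
        then have "chain_lex_less [x,y,z] w" unfolding chain_lex_less_def wdef
          by (intro exI[of _ 0]) simp
        then show ?thesis using u0 w0 by (simp add: chain_less_def)
      next
        case True
        have eq2: "\<forall>k. w2 k + w3 k = y k + z k"
        proof
          fix k show "w2 k + w3 k = y k + z k" using ws[rule_format, of k] True by simp
        qed
        have "is_chain n d (length [y,z]) [w2,w3]" using wV by (simp add: is_chain_def)
        moreover have "chain_sum [w2,w3] = chain_sum [y,z]" using eq2 by (simp add: chain_sum2)
        ultimately have "[w2,w3] = [y,z] \<or> chain_less (avec n d) [y,z] [w2,w3]"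
          using assms(8) unfolding minimal_chain_def by blast
        then show ?thesis
        proof
          assume "[w2,w3] = [y,z]" then show ?thesis using True wdef by simp
        next
          assume "chain_less (avec n d) [y,z] [w2,w3]"
          moreover have "adeg a [y,z] = 0" "adeg a [w2,w3] = 0" using y z wa by (auto simp: adeg_def)
          ultimately have "chain_lex_less [y,z] [w2,w3]" by (simp add: chain_less_def a_def)
          then obtain i where i: "i < 2" "\<forall>j<i. [y,z]!j = [w2,w3]!j" "vlex_less ([y,z]!i) ([w2,w3]!i)"
            unfolding chain_lex_less_def by (metis length_Cons list.size(3) numeral_2_eq_2)
          have "chain_lex_less [x,y,z] w" unfolding chain_lex_less_def wdef
          proof (intro exI[of _ "Suc i"] conjI)
            show "Suc i < length [x, y, z]" using i(1) by simp
            show "\<forall>j<Suc i. [x, y, z] ! j = [w1, w2, w3] ! j"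
              using i(2) True by (auto simp: less_Suc_eq_0_disj)
            show "vlex_less ([x, y, z] ! Suc i) ([w1, w2, w3] ! Suc i)" using i(3) by simp
          qed
          then show ?thesis using u0 w0 by (simp add: chain_less_def)
        qed
      qed
    qed
  qed
  then show ?thesis by (simp add: a_def)
qed

end
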